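(* Let $G$ be a finite group and $\mathsf{T}$ a $G$-transfer system. Let $S$ and $R$ be two minimal generating sets for $\mathsf{T}$. Then there exists a bijection $f\colon S\to R$ such that for every $n\in\mathbb{N}$, $f$ sends each element of $S_n\setminus S_{n+1}$ to an element of $R_n\setminus R_{n+1}$.
   Context: For a finite group $G$, an arrow is a pair $(H,K)$ of subgroups with $H\leqslant K$; it is an identity arrow if $H=K$. A $G$-transfer system is a set $\mathsf{T}$ of arrows containing all identity arrows and closed under composition ($(H,K),(K,L)\in\mathsf{T}\Rightarrow(H,L)\in\mathsf{T}$), conjugation ($(H,K)\in\mathsf{T}\Rightarrow(gHg^{-1},gKg^{-1})\in\mathsf{T}$ for all $g\in G$) and restriction ($(H,K)\in\mathsf{T}$, $L\leqslant K\Rightarrow(H\cap L,L)\in\mathsf{T}$). For a set $S$ of non-identity arrows, $\langle S\rangle$ is the smallest transfer system containing $S$. A minimal generating set of $\mathsf{T}$ is a set $S\subseteq\mathsf{T}$ of non-identity arrows with $\langle S\rangle=\mathsf{T}$ and $\langle S\setminus\{s\}\rangle\subsetneq\mathsf{T}$ for all $s\in S$. For a subgroup $H$, let $P(H)$ be the sum of the exponents in the prime factorization of $|H|$ (i.e. the number of prime factors of $|H|$ counted with multiplicity). For a set $S$ of non-identity arrows and $N\in\mathbb{N}$, put $S_N=\{(K,H)\in S : P(K)\geqslant N\}$, where $(K,H)$ denotes an arrow with $K\leqslant H$. *)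

theory Defs
  imports "HOL-Algebra.Algebra" "HOL-Computational_Algebra.Primes"
begin

definition is_arrow :: "('a, 'b) monoid_scheme \<Rightarrow> 'a set \<times> 'a set \<Rightarrow> bool" where
  "is_arrow G a \<longleftrightarrow> subgroup (fst a) G \<and> subgroup (snd a) G \<and> fst a \<subseteq> snd a"

definition conj_sub :: "('a, 'b) monoid_scheme \<Rightarrow> 'a \<Rightarrow> 'a set \<Rightarrow> 'a set" where
  "conj_sub G g H = (\<lambda>h. g \<otimes>\<^bsub>G\<^esub> h \<otimes>\<^bsub>G\<^esub> inv\<^bsub>G\<^esub> g) ` H"

definition transfer_system :: "('a, 'b) monoid_scheme \<Rightarrow> ('a set \<times> 'a set) set \<Rightarrow> bool" where
  "transfer_system G T \<longleftrightarrow>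
     (\<forall>a\<in>T. is_arrow G a) \<and>
     (\<forall>H. subgroup H G \<longrightarrow> (H, H) \<in> T) \<and>
     (\<forall>H K L. (H, K) \<in> T \<longrightarrow> (K, L) \<in> T \<longrightarrow> (H, L) \<in> T) \<and>
     (\<forall>H K g. (H, K) \<in> T \<longrightarrow> g \<in> carrier G \<longrightarrow> (conj_sub G g H, conj_sub G g K) \<in> T) \<and>
     (\<forall>H K L. (H, K) \<in> T \<longrightarrow> subgroup L G \<longrightarrow> L \<subseteq> K \<longrightarrow> (H \<inter> L, L) \<in> T)"

definition generated_ts :: "('a, 'b) monoid_scheme \<Rightarrow> ('a set \<times> 'a set) set \<Rightarrow> ('a set \<times> 'a set) set" where
  "generated_ts G S = \<Inter> {T. transfer_system G T \<and> S \<subseteq> T}"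

definition minimal_generating_set ::
  "('a, 'b) monoid_scheme \<Rightarrow> ('a set \<times> 'a set) set \<Rightarrow> ('a set \<times> 'a set) set \<Rightarrow> bool" where
  "minimal_generating_set G T S \<longleftrightarrow>
     S \<subseteq> T \<and> (\<forall>a\<in>S. fst a \<noteq> snd a) \<and>
     generated_ts G S = T \<and> (\<forall>s\<in>S. generated_ts G (S - {s}) \<subset> T)"

definition P_len :: "'a set \<Rightarrow> nat" where
  "P_len H = size (prime_factorization (card H))"

definition S_ge :: "('a set \<times> 'a set) set \<Rightarrow> nat \<Rightarrow> ('a set \<times> 'a set) set" where
  "S_ge S N = {a \<in> S. N \<le> P_len (fst a)}"

end

theory Submission
  imports Defs
begin

lemma ts_Inter:
  assumes ne: "F \<noteq> {}" and ts: "\<And>T. T \<in> F \<Longrightarrow> transfer_system G T"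
  shows "transfer_system G (\<Inter>F)"
  unfolding transfer_system_def
proof (intro conjI allI impI ballI)
  fix a assume "a \<in> \<Inter>F"
  then show "is_arrow G a" using ne ts unfolding transfer_system_def by blast
next
  fix H assume "subgroup H G" then show "(H, H) \<in> \<Inter>F" using ts unfolding transfer_system_def by blast
next
  fix H K L assume "(H, K) \<in> \<Inter>F" "(K, L) \<in> \<Inter>F"
  then show "(H, L) \<in> \<Inter>F" using ts unfolding transfer_system_def by blast
next
  fix H K g assume "(H, K) \<in> \<Inter>F" "g \<in> carrier G"
  then show "(conj_sub G g H, conj_sub G g K) \<in> \<Inter>F" using ts unfolding transfer_system_def by blast
next
  fix H K L assume "(H, K) \<in> \<Inter>F" "subgroup L G" "L \<subseteq> K"
  then show "(H \<inter> L, L) \<in> \<Inter>F" using ts unfolding transfer_system_def by blast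
qed

lemma gen_sub: "Xs \<subseteq> generated_ts G Xs"
  unfolding generated_ts_def by auto

lemma gen_mono: "Xs \<subseteq> Ys \<Longrightarrow> generated_ts G Xs \<subseteq> generated_ts G Ys"
  unfolding generated_ts_def by auto

lemma gen_least: "transfer_system G T \<Longrightarrow> Xs \<subseteq> T \<Longrightarrow> generated_ts G Xs \<subseteq> T"
  unfolding generated_ts_def by auto

lemma (in group) inv_cancel_left:
  "g \<in> carrier G \<Longrightarrow> z \<in> carrier G \<Longrightarrow> inv g \<otimes> (g \<otimes> z) = z"
  by (metis inv_closed l_inv l_one m_assoc)

lemma (in group) conj_inv_eq:
  assumes g: "g \<in> carrier G" and hc: "h \<in> carrier G"
  shows "inv (g \<otimes> h \<otimes> inv g) = g \<otimes> inv h \<otimes> inv g"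
proof -
  have "inv (g \<otimes> h \<otimes> inv g) = inv (inv g) \<otimes> inv (g \<otimes> h)"
    by (rule inv_mult_group[OF m_closed[OF g hc] inv_closed[OF g]])
  also have "\<dots> = g \<otimes> (inv h \<otimes> inv g)"
    by (simp only: inv_inv[OF g] inv_mult_group[OF g hc])
  also have "\<dots> = g \<otimes> inv h \<otimes> inv g"
    by (rule m_assoc[OF g inv_closed[OF hc] inv_closed[OF g], symmetric])
  finally show ?thesis .
qed

lemma (in group) conj_mult_eq:
  assumes g: "g \<in> carrier G" and h: "h \<in> carrier G" and k: "k \<in> carrier G"
  shows "(g \<otimes> h \<otimes> inv g) \<otimes> (g \<otimes> k \<otimes> inv g) = g \<otimes> (h \<otimes> k) \<otimes> inv g"
proof -
  have ig: "inv g \<in> carrier G" using g by (rule inv_closed)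
  have 1: "(g \<otimes> h \<otimes> inv g) \<otimes> (g \<otimes> k \<otimes> inv g) = (g \<otimes> h) \<otimes> (inv g \<otimes> (g \<otimes> (k \<otimes> inv g)))"
    using g h k ig by (simp only: m_assoc m_closed)
  have 2: "inv g \<otimes> (g \<otimes> (k \<otimes> inv g)) = k \<otimes> inv g"
    by (rule inv_cancel_left[OF g m_closed[OF k ig]])
  have 3: "(g \<otimes> h) \<otimes> (k \<otimes> inv g) = g \<otimes> (h \<otimes> k) \<otimes> inv g"
    using g h k ig by (simp only: m_assoc m_closed)
  show ?thesis by (simp only: 1 2 3)
qed

lemma (in group) conj_sub_subgroup:
  assumes H: "subgroup H G" and g: "g \<in> carrier G"
  shows "subgroup (conj_sub G g H) G"
proof -
  have HC: "H \<subseteq> carrier G" using H by (rule subgroup.subset)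
  show ?thesis
  proof (rule subgroupI)
    show "conj_sub G g H \<subseteq> carrier G"
    proof
      fix x assume "x \<in> conj_sub G g H"
      then obtain h where h: "h \<in> H" "x = g \<otimes> h \<otimes> inv g" unfolding conj_sub_def by blast
      have hc: "h \<in> carrier G" using HC h(1) by (rule subsetD)
      show "x \<in> carrier G" unfolding h(2) by (intro m_closed inv_closed g hc)
    qed
    have "g \<otimes> \<one> \<otimes> inv g \<in> conj_sub G g H" unfolding conj_sub_def
      by (rule imageI[OF subgroup.one_closed[OF H]])
    then show "conj_sub G g H \<noteq> {}" by blast
  next
    fix x assume "x \<in> conj_sub G g H"
    then obtain h where h: "h \<in> H" "x = g \<otimes> h \<otimes> inv g" unfolding conj_sub_def by blast
    have hc: "h \<in> carrier G" using HC h(1) by (rule subsetD)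
    have eq: "inv x = g \<otimes> inv h \<otimes> inv g" unfolding h(2) by (rule conj_inv_eq[OF g hc])
    have "inv h \<in> H" by (rule subgroup.m_inv_closed[OF H h(1)])
    then show "inv x \<in> conj_sub G g H" unfolding conj_sub_def eq by (rule imageI)
  next
    fix x y assume "x \<in> conj_sub G g H" "y \<in> conj_sub G g H"
    then obtain h k where h: "h \<in> H" "x = g \<otimes> h \<otimes> inv g" and k: "k \<in> H" "y = g \<otimes> k \<otimes> inv g"
      unfolding conj_sub_def by blast
    have hc: "h \<in> carrier G" using HC h(1) by (rule subsetD)
    have kc: "k \<in> carrier G" using HC k(1) by (rule subsetD)
    have eq: "x \<otimes> y = g \<otimes> (h \<otimes> k) \<otimes> inv g" unfolding h(2) k(2) by (rule conj_mult_eq[OF g hc kc])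
    have "h \<otimes> k \<in> H" by (rule subgroup.m_closed[OF H h(1) k(1)])
    then show "x \<otimes> y \<in> conj_sub G g H" unfolding conj_sub_def eq by (rule imageI)
  qed
qed

lemma (in group) conj_sub_card:
  assumes HC: "H \<subseteq> carrier G" and g: "g \<in> carrier G"
  shows "card (conj_sub G g H) = card H"
proof -
  have "inj_on (\<lambda>h. g \<otimes> h \<otimes> inv g) H"
  proof (rule inj_onI)
    fix x y assume xy: "x \<in> H" "y \<in> H" "g \<otimes> x \<otimes> inv g = g \<otimes> y \<otimes> inv g"
    then have "g \<otimes> x = g \<otimes> y" using HC g by (meson m_closed inv_closed r_cancel subsetD)
    then show "x = y" using HC g xy by (meson l_cancel subsetD)
  qed
  then show ?thesis unfolding conj_sub_def by (simp add: card_image)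
qed

lemma (in group) all_arrows_ts:
  "transfer_system G {a. is_arrow G a}"
  unfolding transfer_system_def is_arrow_def
proof (intro conjI allI impI ballI)
  fix H K g assume "(H, K) \<in> {a. subgroup (fst a) G \<and> subgroup (snd a) G \<and> fst a \<subseteq> snd a}"
    "g \<in> carrier G"
  then show "(conj_sub G g H, conj_sub G g K) \<in> {a. subgroup (fst a) G \<and> subgroup (snd a) G \<and> fst a \<subseteq> snd a}"
    using conj_sub_subgroup unfolding conj_sub_def by auto
next
  fix H K L assume "(H, K) \<in> {a. subgroup (fst a) G \<and> subgroup (snd a) G \<and> fst a \<subseteq> snd a}"
    "subgroup L G" "L \<subseteq> K"
  then show "(H \<inter> L, L) \<in> {a. subgroup (fst a) G \<and> subgroup (snd a) G \<and> fst a \<subseteq> snd a}"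
    using subgroups_Inter_pair by auto
qed auto

lemma gen_ts:
  assumes grp: "group G" and Xs: "\<forall>a\<in>Xs. is_arrow G a"
  shows "transfer_system G (generated_ts G Xs)"
  unfolding generated_ts_def
  apply (rule ts_Inter)
  using group.all_arrows_ts[OF grp] Xs by auto

lemma gen_closed:
  assumes grp: "group G" and Ys: "\<forall>a\<in>Ys. is_arrow G a" and XY: "Xs \<subseteq> generated_ts G Ys"
  shows "generated_ts G Xs \<subseteq> generated_ts G Ys"
  using gen_least[OF gen_ts[OF grp Ys] XY] .

lemma (in group) sub_card_dvd:
  assumes fin: "finite (carrier G)" and I: "subgroup I G" and J: "subgroup J G" and IJ: "I \<subseteq> J"
  shows "card I dvd card J"
proof -
  have gJ: "group (G\<lparr>carrier := J\<rparr>)" by (rule subgroup_imp_group[OF J])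
  have sI: "subgroup I (G\<lparr>carrier := J\<rparr>)" by (rule subgroup_incl[OF I J IJ])
  have "card (rcosets\<^bsub>G\<lparr>carrier := J\<rparr>\<^esub> I) * card I = order (G\<lparr>carrier := J\<rparr>)"
    by (rule group.lagrange[OF gJ sI])
  then have "card J = card (rcosets\<^bsub>G\<lparr>carrier := J\<rparr>\<^esub> I) * card I"
    by (simp add: order_def)
  then show ?thesis by simp
qed

lemma (in group) sub_card_pos:
  assumes fin: "finite (carrier G)" and H: "subgroup H G"
  shows "card H \<noteq> 0"
proof -
  have "finite H" using fin subgroup.subset[OF H] by (rule finite_subset[rotated])
  moreover have "H \<noteq> {}" using subgroup.one_closed[OF H] by blast
  ultimately show ?thesis by simp
qed

lemma P_le:
  assumes d: "card H dvd card K" and K: "card K \<noteq> 0"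
  shows "P_len H \<le> P_len K"
proof -
  have H: "card H \<noteq> 0" using d K by auto
  have "prime_factorization (card H) \<subseteq># prime_factorization (card K)"
    using prime_factorization_subset_iff_dvd[OF H K] d by simp
  then show ?thesis unfolding P_len_def by (rule size_mset_mono)
qed

lemma P_eq_card:
  assumes d: "card H dvd card K" and K: "card K \<noteq> 0" and e: "P_len H = P_len K"
  shows "card H = card K"
proof -
  obtain c where c: "card K = card H * c" using d by blast
  have H: "card H \<noteq> 0" and c0: "c \<noteq> 0" using c K by auto
  have "prime_factorization (card K) = prime_factorization (card H) + prime_factorization c"
    unfolding c by (rule prime_factorization_mult[OF H c0])
  then have "size (prime_factorization c) = 0" using e unfolding P_len_def by simp
  then have "prime_factorization c = {#}" by simp
  then have "c = 1" using c0 by (simp add: prime_factorization_empty_iff)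
  then show ?thesis using c by simp
qed

lemma (in group) sub_P_le:
  assumes fin: "finite (carrier G)" and I: "subgroup I G" and J: "subgroup J G" and IJ: "I \<subseteq> J"
  shows "P_len I \<le> P_len J"
  by (rule P_le[OF sub_card_dvd[OF fin I J IJ] sub_card_pos[OF fin J]])

lemma (in group) sub_P_eq:
  assumes fin: "finite (carrier G)" and I: "subgroup I G" and J: "subgroup J G" and IJ: "I \<subseteq> J"
    and e: "P_len I = P_len J"
  shows "I = J"
proof -
  have "card I = card J" by (rule P_eq_card[OF sub_card_dvd[OF fin I J IJ] sub_card_pos[OF fin J] e])
  moreover have "finite J" using fin subgroup.subset[OF J] by (rule finite_subset[rotated])
  ultimately show ?thesis using IJ by (simp add: card_subset_eq)
qed

definition lev :: "'a set \<times> 'a set \<Rightarrow> nat" where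
  "lev a = P_len (fst a)"

definition gt :: "('a set \<times> 'a set) set \<Rightarrow> nat \<Rightarrow> ('a set \<times> 'a set) set" where
  "gt W m = {w \<in> W. m < lev w}"

lemma lev_pair[simp]: "lev (H, K) = P_len H"
  by (simp add: lev_def)

lemma gt_sub: "gt W m \<subseteq> W"
  unfolding gt_def by blast

definition good :: "('a, 'b) monoid_scheme \<Rightarrow> ('a set \<times> 'a set) set \<Rightarrow> 'a set \<times> 'a set \<Rightarrow> bool" where
  "good G W a \<longleftrightarrow> (\<exists>Z\<subseteq>W. (\<forall>z\<in>Z. lev z = lev a) \<and> (Z = {} \<or> (\<exists>w. Z = {w})) \<and>
      a \<in> generated_ts G (gt W (lev a) \<union> Z))"

lemma key:
  assumes grp: "group G" and fin: "finite (carrier G)" and W: "\<forall>w\<in>W. is_arrow G w"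
    and a: "a \<in> generated_ts G W"
  shows "good G W a"
proof -
  interpret group G by (rule grp)
  define Q where "Q = {a. is_arrow G a \<and> good G W a}"
  have arrZ: "\<forall>x\<in>gt W m \<union> Z. is_arrow G x" if "Z \<subseteq> W" for m Z
    using W that gt_sub by blast
  have tsZ: "transfer_system G (generated_ts G (gt W m \<union> Z))" if "Z \<subseteq> W" for m Z
    by (rule gen_ts[OF grp arrZ[OF that]])
  have AT: "transfer_system G {a. is_arrow G a}" by (rule all_arrows_ts)
  have "transfer_system G Q"
    unfolding transfer_system_def
  proof (intro conjI allI impI ballI)
    fix x assume "x \<in> Q" then show "is_arrow G x" unfolding Q_def by blast
  next
    fix H assume H: "subgroup H G"
    have "is_arrow G (H, H)" using H unfolding is_arrow_def by simp
    moreover have "(H, H) \<in> generated_ts G (gt W (P_len H) \<union> {})"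
      using tsZ[of "{}" "P_len H"] H unfolding transfer_system_def by blast
    ultimately show "(H, H) \<in> Q" unfolding Q_def good_def by force
  next
    fix H K L assume HK: "(H, K) \<in> Q" and KL: "(K, L) \<in> Q"
    have aHK: "is_arrow G (H, K)" and aKL: "is_arrow G (K, L)" using HK KL unfolding Q_def by auto
    then have sH: "subgroup H G" and sK: "subgroup K G" and sL: "subgroup L G" and HsK: "H \<subseteq> K" and KsL: "K \<subseteq> L"
      unfolding is_arrow_def by auto
    have aHL: "is_arrow G (H, L)" unfolding is_arrow_def using sH sL HsK KsL by auto
    have le: "P_len H \<le> P_len K" by (rule sub_P_le[OF fin sH sK HsK])
    show "(H, L) \<in> Q"
    proof (cases "P_len H = P_len K")
      case True
      then have "H = K" by (rule sub_P_eq[OF fin sH sK HsK])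
      then show ?thesis using KL by simp
    next
      case False
      then have lt: "P_len H < P_len K" using le by simp
      obtain Z1 where Z1: "Z1 \<subseteq> W" "\<forall>z\<in>Z1. lev z = P_len H" "Z1 = {} \<or> (\<exists>w. Z1 = {w})"
        "(H, K) \<in> generated_ts G (gt W (P_len H) \<union> Z1)"
        using HK unfolding Q_def good_def by auto
      obtain Z2 where Z2: "Z2 \<subseteq> W" "\<forall>z\<in>Z2. lev z = P_len K"
        "(K, L) \<in> generated_ts G (gt W (P_len K) \<union> Z2)"
        using KL unfolding Q_def good_def by auto
      have sub: "gt W (P_len K) \<union> Z2 \<subseteq> gt W (P_len H) \<union> Z1"
        using Z2(1,2) lt unfolding gt_def by auto
      have "(K, L) \<in> generated_ts G (gt W (P_len H) \<union> Z1)"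
        using Z2(3) gen_mono[OF sub, where G=G] by blast
      then have "(H, L) \<in> generated_ts G (gt W (P_len H) \<union> Z1)"
        using Z1(4) tsZ[OF Z1(1), of "P_len H"] unfolding transfer_system_def by blast
      then show ?thesis using Z1 aHL unfolding Q_def good_def by auto
    qed
  next
    fix H K g assume HK: "(H, K) \<in> Q" and g: "g \<in> carrier G"
    have aHK: "is_arrow G (H, K)" using HK unfolding Q_def by auto
    have a': "is_arrow G (conj_sub G g H, conj_sub G g K)"
      using AT aHK g unfolding transfer_system_def by blast
    have HC: "H \<subseteq> carrier G" using aHK subgroup.subset unfolding is_arrow_def by auto
    have eqP: "P_len (conj_sub G g H) = P_len H"
      unfolding P_len_def using conj_sub_card[OF HC g] by simp
    obtain Z1 where Z1: "Z1 \<subseteq> W" "\<forall>z\<in>Z1. lev z = P_len H" "Z1 = {} \<or> (\<exists>w. Z1 = {w})"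
      "(H, K) \<in> generated_ts G (gt W (P_len H) \<union> Z1)"
      using HK unfolding Q_def good_def by auto
    have "(conj_sub G g H, conj_sub G g K) \<in> generated_ts G (gt W (P_len H) \<union> Z1)"
      using Z1(4) g tsZ[OF Z1(1), of "P_len H"] unfolding transfer_system_def by blast
    then show "(conj_sub G g H, conj_sub G g K) \<in> Q"
      using Z1 a' eqP unfolding Q_def good_def by auto
  next
    fix H K L assume HK: "(H, K) \<in> Q" and L: "subgroup L G" and LK: "L \<subseteq> K"
    have aHK: "is_arrow G (H, K)" using HK unfolding Q_def by auto
    have a': "is_arrow G (H \<inter> L, L)"
      using AT aHK L LK unfolding transfer_system_def by blast
    have sH: "subgroup H G" using aHK unfolding is_arrow_def by auto
    have sHL: "subgroup (H \<inter> L) G" by (rule subgroups_Inter_pair[OF sH L])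
    have le: "P_len (H \<inter> L) \<le> P_len H" by (rule sub_P_le[OF fin sHL sH]) blast
    obtain Z1 where Z1: "Z1 \<subseteq> W" "\<forall>z\<in>Z1. lev z = P_len H" "Z1 = {} \<or> (\<exists>w. Z1 = {w})"
      "(H, K) \<in> generated_ts G (gt W (P_len H) \<union> Z1)"
      using HK unfolding Q_def good_def by auto
    have inn: "(H \<inter> L, L) \<in> generated_ts G (gt W (P_len H) \<union> Z1)"
      using Z1(4) L LK tsZ[OF Z1(1), of "P_len H"] unfolding transfer_system_def by blast
    show "(H \<inter> L, L) \<in> Q"
    proof (cases "P_len (H \<inter> L) = P_len H")
      case True
      then show ?thesis using Z1 a' inn unfolding Q_def good_def by auto
    next
      case False
      then have lt: "P_len (H \<inter> L) < P_len H" using le by simp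
      have sub: "gt W (P_len H) \<union> Z1 \<subseteq> gt W (P_len (H \<inter> L)) \<union> {}"
        using Z1(1,2) lt unfolding gt_def by auto
      have "(H \<inter> L, L) \<in> generated_ts G (gt W (P_len (H \<inter> L)) \<union> {})"
        using inn gen_mono[OF sub, where G=G] by blast
      then show ?thesis using a' unfolding Q_def good_def by force
    qed
  qed
  moreover have "W \<subseteq> Q"
  proof
    fix w assume w: "w \<in> W"
    have "w \<in> generated_ts G (gt W (lev w) \<union> {w})" using gen_sub[of "gt W (lev w) \<union> {w}" G] by blast
    then have "good G W w" unfolding good_def using w by (intro exI[of _ "{w}"]) auto
    then show "w \<in> Q" using W w unfolding Q_def by blast
  qed
  ultimately have "generated_ts G W \<subseteq> Q" by (rule gen_least)
  then show ?thesis using a unfolding Q_def by blast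
qed

lemma good_E:
  assumes "good G W a"
  obtains Z where "Z \<subseteq> W" "\<forall>z\<in>Z. lev z = lev a" "a \<in> generated_ts G (gt W (lev a) \<union> Z)"
    "Z = {} \<or> (\<exists>w. Z = {w})"
  using assms unfolding good_def by blast

locale two_min =
  fixes G :: "('a, 'b) monoid_scheme" and T S R :: "('a set \<times> 'a set) set"
  assumes grp: "group G" and fin: "finite (carrier G)"
    and ts: "transfer_system G T"
    and mS: "minimal_generating_set G T S"
    and mR: "minimal_generating_set G T R"
begin

lemma T_arr: "\<forall>a\<in>T. is_arrow G a"
  using ts unfolding transfer_system_def by blast

lemma S_sub: "S \<subseteq> T" and S_gen: "generated_ts G S = T"
  and S_min: "\<And>s. s \<in> S \<Longrightarrow> generated_ts G (S - {s}) \<subset> T"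
  using mS unfolding minimal_generating_set_def by auto

lemma arr: "A \<subseteq> T \<Longrightarrow> \<forall>a\<in>A. is_arrow G a"
  using T_arr by blast

lemma closed: "A \<subseteq> T \<Longrightarrow> B \<subseteq> generated_ts G A \<Longrightarrow> generated_ts G B \<subseteq> generated_ts G A"
  by (rule gen_closed[OF grp arr])

lemma not_red: "s \<in> S \<Longrightarrow> s \<notin> generated_ts G (S - {s})"
proof
  assume s: "s \<in> S" and r: "s \<in> generated_ts G (S - {s})"
  have "S \<subseteq> generated_ts G (S - {s})" using r gen_sub[of "S - {s}" G] by blast
  then have "generated_ts G S \<subseteq> generated_ts G (S - {s})"
    by (rule closed[rotated]) (use S_sub in blast)
  then show False using S_min[OF s] S_gen by blast
qed

lemma not_red_gt: "s \<in> S \<Longrightarrow> lev s = n \<Longrightarrow> s \<notin> generated_ts G (gt S n)"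
proof
  assume s: "s \<in> S" "lev s = n" and r: "s \<in> generated_ts G (gt S n)"
  have sub: "gt S n \<subseteq> S - {s}" using s unfolding gt_def by auto
  show False using r not_red[OF s(1)] gen_mono[OF sub, where G=G] by blast
qed

lemma uniq:
  assumes s1: "s1 \<in> S" and s2: "s2 \<in> S" and l2: "lev s2 = n"
    and r: "s2 \<in> generated_ts G (gt S n \<union> {s1})"
  shows "s1 = s2"
proof (rule ccontr)
  assume ne: "s1 \<noteq> s2"
  have sub: "gt S n \<union> {s1} \<subseteq> S - {s2}" using s1 ne l2 unfolding gt_def by auto
  show False using r not_red[OF s2] gen_mono[OF sub, where G=G] by blast
qed

lemma gtT: "gt S n \<subseteq> T"
  using S_sub gt_sub by blast

end

lemma (in two_min) incl: "generated_ts G (gt R n) \<subseteq> generated_ts G (gt S n)"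
proof -
  interpret RS: two_min G T R S by (rule two_min.intro[OF grp fin ts mR mS])
  have "gt R n \<subseteq> generated_ts G (gt S n)"
  proof
    fix r assume r: "r \<in> gt R n"
    then have rT: "r \<in> generated_ts G S" using RS.S_sub S_gen gt_sub by blast
    have "good G S r" by (rule key[OF grp fin arr[OF S_sub] rT])
    then obtain Z where Z: "Z \<subseteq> S" "\<forall>z\<in>Z. lev z = lev r" "r \<in> generated_ts G (gt S (lev r) \<union> Z)"
      by (rule good_E)
    have sub: "gt S (lev r) \<union> Z \<subseteq> gt S n" using Z(1,2) r unfolding gt_def by auto
    show "r \<in> generated_ts G (gt S n)" using Z(3) gen_mono[OF sub, where G=G] by blast
  qed
  then show ?thesis by (rule closed[OF gtT])
qed

lemma (in two_min) match:
  assumes s: "s \<in> S" and l: "lev s = n"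
  shows "\<exists>r\<in>R. lev r = n \<and> s \<in> generated_ts G (gt S n \<union> {r}) \<and> r \<in> generated_ts G (gt S n \<union> {s})"
proof -
  interpret RS: two_min G T R S by (rule two_min.intro[OF grp fin ts mR mS])
  have sT: "s \<in> generated_ts G R" using s S_sub RS.S_gen by blast
  have "good G R s" by (rule key[OF grp fin arr[OF RS.S_sub] sT])
  then obtain Z where Z0: "Z \<subseteq> R" "\<forall>z\<in>Z. lev z = lev s" "s \<in> generated_ts G (gt R (lev s) \<union> Z)"
    "Z = {} \<or> (\<exists>w. Z = {w})"
    by (rule good_E)
  have Z: "Z \<subseteq> R" "\<forall>z\<in>Z. lev z = n" "s \<in> generated_ts G (gt R n \<union> Z)"
    "Z = {} \<or> (\<exists>w. Z = {w})" using Z0 by (simp_all add: l)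
  have ZT: "gt S n \<union> Z \<subseteq> T" using Z(1) RS.S_sub gtT by blast
  have "gt R n \<union> Z \<subseteq> generated_ts G (gt S n \<union> Z)"
    using incl[of n] gen_sub[of "gt R n" G] gen_mono[OF Un_upper1[of "gt S n" Z], where G=G] gen_sub[of "gt S n \<union> Z" G]
    by blast
  then have s2: "s \<in> generated_ts G (gt S n \<union> Z)" using Z(3) closed[OF ZT] by blast
  show ?thesis
  proof (cases "Z = {}")
    case True
    then show ?thesis using s2 not_red_gt[OF s l] by simp
  next
    case False
    then obtain r where r: "Z = {r}" using Z(4) by blast
    have rR: "r \<in> R" and lr: "lev r = n" using r Z(1,2) by auto
    have rT: "r \<in> generated_ts G S" using rR RS.S_sub S_gen by blast
    have "good G S r" by (rule key[OF grp fin arr[OF S_sub] rT])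
    then obtain Z' where Z0': "Z' \<subseteq> S" "\<forall>z\<in>Z'. lev z = lev r" "r \<in> generated_ts G (gt S (lev r) \<union> Z')"
      "Z' = {} \<or> (\<exists>w. Z' = {w})"
      by (rule good_E)
    have Z': "Z' \<subseteq> S" "\<forall>z\<in>Z'. lev z = n" "r \<in> generated_ts G (gt S n \<union> Z')"
      "Z' = {} \<or> (\<exists>w. Z' = {w})" using Z0' by (simp_all add: lr)
    have Z'T: "gt S n \<union> Z' \<subseteq> T" using Z'(1) S_sub gtT by blast
    have "gt S n \<union> {r} \<subseteq> generated_ts G (gt S n \<union> Z')"
      using Z'(3) gen_sub[of "gt S n \<union> Z'" G] by blast
    then have s3: "s \<in> generated_ts G (gt S n \<union> Z')" using s2 r closed[OF Z'T] by blast
    show ?thesis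
    proof (cases "Z' = {}")
      case True
      then show ?thesis using s3 not_red_gt[OF s l] by simp
    next
      case False
      then obtain s' where s': "Z' = {s'}" using Z'(4) by blast
      have "s' = s" by (rule uniq[of s' s n]) (use s' Z'(1) s l s3 in auto)
      then show ?thesis using rR lr s2 r Z'(3) s' by auto
    qed
  qed
qed

lemma (in two_min) main:
  "\<exists>f. bij_betw f S R \<and> (\<forall>a\<in>S. lev (f a) = lev a)"
proof -
  interpret RS: two_min G T R S by (rule two_min.intro[OF grp fin ts mR mS])
  define f where "f s = (SOME r. r \<in> R \<and> lev r = lev s \<and> s \<in> generated_ts G (gt S (lev s) \<union> {r})
     \<and> r \<in> generated_ts G (gt S (lev s) \<union> {s}))" for s
  have fP: "f s \<in> R \<and> lev (f s) = lev s \<and> s \<in> generated_ts G (gt S (lev s) \<union> {f s})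
     \<and> f s \<in> generated_ts G (gt S (lev s) \<union> {s})" if s: "s \<in> S" for s
    unfolding f_def by (rule someI_ex) (use match[OF s refl] in blast)
  have "inj_on f S"
  proof (rule inj_onI)
    fix s1 s2 assume s1: "s1 \<in> S" and s2: "s2 \<in> S" and e: "f s1 = f s2"
    define n where "n = lev s1"
    have l2: "lev s2 = n" using fP[OF s1] fP[OF s2] e n_def by simp
    have A: "f s1 \<in> generated_ts G (gt S n \<union> {s1})" using fP[OF s1] n_def by simp
    have B: "s2 \<in> generated_ts G (gt S n \<union> {f s1})" using fP[OF s2] e l2 by simp
    have T1: "gt S n \<union> {s1} \<subseteq> T" using s1 S_sub gtT by blast
    have "gt S n \<union> {f s1} \<subseteq> generated_ts G (gt S n \<union> {s1})"
      using A gen_sub[of "gt S n \<union> {s1}" G] by blast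
    then have "s2 \<in> generated_ts G (gt S n \<union> {s1})" using B closed[OF T1] by blast
    then show "s1 = s2" by (rule uniq[OF s1 s2 l2])
  qed
  moreover have "f ` S = R"
  proof
    show "f ` S \<subseteq> R" using fP by blast
  next
    show "R \<subseteq> f ` S"
    proof
      fix r assume r: "r \<in> R"
      define n where "n = lev r"
      obtain s where s: "s \<in> S" "lev s = n" "r \<in> generated_ts G (gt R n \<union> {s})"
        "s \<in> generated_ts G (gt R n \<union> {r})"
        using RS.match[OF r n_def[symmetric]] by blast
      have C: "f s \<in> generated_ts G (gt S n \<union> {s})" and fR: "f s \<in> R" and lf: "lev (f s) = n"
        using fP[OF s(1)] s(2) by auto
      have T2: "gt R n \<union> {r} \<subseteq> T" using r RS.S_sub RS.gtT by blast
      have "gt S n \<union> {s} \<subseteq> generated_ts G (gt R n \<union> {r})"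
        using s(4) RS.incl[of n] gen_sub[of "gt S n" G] gen_mono[OF Un_upper1[of "gt R n" "{r}"], where G=G] by blast
      then have "f s \<in> generated_ts G (gt R n \<union> {r})" using C closed[OF T2] by blast
      then have "r = f s" by (rule RS.uniq[OF r fR lf])
      then show "r \<in> f ` S" using s(1) by blast
    qed
  qed
  ultimately show ?thesis unfolding bij_betw_def using fP by blast
qed

theorem proposition2p13:
  fixes G :: "('a, 'b) monoid_scheme"
    and T S R :: "('a set \<times> 'a set) set"
  assumes "group G" and "finite (carrier G)"
    and "transfer_system G T"
    and "minimal_generating_set G T S"
    and "minimal_generating_set G T R"
  shows "\<exists>f. bij_betw f S R \<and>
           (\<forall>n::nat. \<forall>a \<in> S_ge S n - S_ge S (n + 1). f a \<in> S_ge R n - S_ge R (n + 1))"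
proof -
  interpret two_min G T S R by (rule two_min.intro[OF assms])
  obtain f where f: "bij_betw f S R" "\<forall>a\<in>S. lev (f a) = lev a" using main by blast
  have "f a \<in> S_ge R n - S_ge R (n + 1)" if a: "a \<in> S_ge S n - S_ge S (n + 1)" for n a
  proof -
    have aS: "a \<in> S" and la: "lev a = n" using a unfolding S_ge_def lev_def by auto
    have "f a \<in> R" using f(1) aS bij_betwE by blast
    then show ?thesis using f(2) aS la unfolding S_ge_def lev_def by auto
  qed
  then show ?thesis using f(1) by blast
qed

end
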